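(* Let $H:\mathbb{R}\to\mathbb{R}$ be a smooth, bounded function with $H(-s)=H(s)\ge 0$ for all $s$, $\int_0^{+\infty} sH(s)\,ds=1$, and such that $H$ either has compact support or $H$ and all its derivatives decay sufficiently fast as $|s|\to\infty$. Let $\zeta:\mathbb{R}\to\mathbb{R}$ be continuous and bounded with $\min_{x\in\mathbb{R}}\zeta(x)=\delta_m>0$, and define $\gamma(s,x)=\zeta(x)^{-2}H(s/\zeta(x))$. Let $\psi_0$ be piecewise continuous and uniformly bounded on $\mathbb{R}$ with a finite number of discontinuities, and let $u=u(x,t)$ be the solution of $$u_t(x,t)+\int_0^{+\infty}\big[u(x,t)-u(x-s,t)\big]\gamma(s,x)\,ds=0,\quad x\in\mathbb{R},\ t>0,\qquad u(x,0)=\psi_0(x).$$ Then for all $t>0$ the function $u(\cdot,t)$ remains piecewise continuous, and its only points of discontinuity are (among) the points of discontinuity of the initial data $\psi_0$.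
   Context: This is a nonlocal analogue of the linear convection equation $u_t+u_x=0$; the integral term is an upwind nonlocal derivative with kernel $\gamma$ and spatially varying horizon parameter $\zeta(x)$, which measures the range of nonlocal interactions. Throughout, the horizon is assumed strictly positive everywhere (fully nonlocal regime). *)

theory Defs
  imports "HOL-Analysis.Analysis"
begin

definition gamma_ker :: "(real \<Rightarrow> real) \<Rightarrow> (real \<Rightarrow> real) \<Rightarrow> real \<Rightarrow> real \<Rightarrow> real" where
  "gamma_ker H \<zeta> s x = H (s / \<zeta> x) / (\<zeta> x)\<^sup>2"

definition pw_cont_off :: "(real \<Rightarrow> real) \<Rightarrow> real set \<Rightarrow> bool" where
  "pw_cont_off f D \<longleftrightarrow> finite D \<and> (\<forall>x. x \<notin> D \<longrightarrow> isCont f x) \<and>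
     (\<forall>d\<in>D. (\<exists>l. (f \<longlongrightarrow> l) (at_left d)) \<and> (\<exists>r. (f \<longlongrightarrow> r) (at_right d)))"

definition smooth_fun :: "(real \<Rightarrow> real) \<Rightarrow> bool" where
  "smooth_fun H \<longleftrightarrow> (\<forall>k x. ((deriv ^^ k) H) differentiable (at x))"

end

theory Submission imports Defs "HOL-Probability.Sinc_Integral" begin
lemma inv_bound:
  fixes x y x0 R :: real assumes "\<bar>x - x0\<bar> \<le> R"
  shows "inverse (1 + (x-y)^2) \<le> (2 + 2*R^2) * inverse (1 + (y-x0)^2)"
proof -
  have r: "(x-x0)^2 \<le> R^2" using assms by (metis abs_ge_zero power2_abs power_mono)
  have s: "(y-x0)^2 \<le> 2*(x-y)^2 + 2*(x-x0)^2"
    using zero_le_power2[of "2*x - y - x0"] by (simp add: power2_eq_square algebra_simps)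
  have "1 + (y-x0)^2 \<le> (2 + 2*R^2) * (1 + (x-y)^2)"
    using r s by (simp add: algebra_simps) (smt (verit) zero_le_power2 mult_nonneg_nonneg)
  then show ?thesis by (simp add: field_simps add_pos_nonneg)
qed

lemma cont_lemma:
  fixes v :: "real \<Rightarrow> real" and g :: "real \<Rightarrow> real \<Rightarrow> real"
  assumes vb: "\<And>y. \<bar>v y\<bar> \<le> B"
  and gnn: "\<And>s x. 0 \<le> g s x" and gb: "\<And>s x. g s x \<le> Cg * inverse (1 + s^2)"
  and gc: "\<And>X y. X \<longlonglongrightarrow> x0 \<Longrightarrow> (\<lambda>n. g (X n - y) (X n)) \<longlonglongrightarrow> g (x0 - y) x0"
  and int: "\<And>x. set_integrable lborel {0<..} (\<lambda>s. v (x-s) * g s x)"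
  shows "isCont (\<lambda>x. LBINT s:{0<..}. v (x-s) * g s x) x0"
proof -
  define F where "F x y = indicator {0<..} (x - y) * (v y * g (x - y) x)" for x y :: real
  have eq: "(LBINT s:{0<..}. v (x-s) * g s x) = (\<integral>y. F x y \<partial>lborel)" for x
    using lborel_integral_real_affine[of "-1" "\<lambda>s. indicator {0<..} s *\<^sub>R (v (x-s) * g s x)" x]
    unfolding set_lebesgue_integral_def F_def by simp
  have intF: "integrable lborel (F x)" for x
    using lborel_integrable_real_affine[OF int[of x, unfolded set_integrable_def], of "-1" x]
    unfolding F_def by simp
  have B0: "0 \<le> B" using vb[of 0] by simp
  have Cg0: "0 \<le> Cg" using gb[of 0 0] gnn[of 0 0] by simp
  have ib: "integrable lborel (\<lambda>y::real. inverse (1 + y^2))"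
    using integrable_inverse_1_plus_square by (simp add: set_integrable_def einterval_eq_UNIV)
  show ?thesis
    unfolding eq continuous_at_sequentially comp_def
  proof (intro allI impI)
    fix X assume X: "X \<longlonglongrightarrow> x0"
    have "(\<lambda>n. X n - x0) \<longlonglongrightarrow> 0" using X by (simp add: LIM_zero)
    then have "Bseq (\<lambda>n. X n - x0)" using convergent_imp_Bseq convergentI by blast
    then obtain R where R: "R > 0" "\<And>n. norm (X n - x0) \<le> R" unfolding Bseq_def by blast
    define w where "w y = B * Cg * (2 + 2 * R^2) * inverse (1 + (y - x0)^2)" for y
    have "integrable lborel (\<lambda>y. inverse (1 + (- x0 + 1 * y)^2))"
      using lborel_integrable_real_affine[OF ib, of 1 "-x0"] by simp
    moreover have "(\<lambda>y. inverse (1 + (- x0 + 1 * y)^2)) = (\<lambda>y. inverse (1 + (y - x0)^2))"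
      by (simp add: algebra_simps)
    ultimately have iw: "integrable lborel w"
      unfolding w_def by simp
    show "(\<lambda>n. \<integral>y. F (X n) y \<partial>lborel) \<longlonglongrightarrow> \<integral>y. F x0 y \<partial>lborel"
    proof (rule integral_dominated_convergence[where w=w])
      show "F x0 \<in> borel_measurable lborel" using intF by auto
      show "F (X n) \<in> borel_measurable lborel" for n using intF by auto
      show "integrable lborel w" by fact
      have "AE y in lborel. y \<noteq> x0" by (rule AE_lborel_singleton)
      then show "AE y in lborel. (\<lambda>n. F (X n) y) \<longlonglongrightarrow> F x0 y"
      proof eventually_elim
        case (elim y)
        show "(\<lambda>n. F (X n) y) \<longlonglongrightarrow> F x0 y"
        proof (cases "y < x0")
          case True
          have "\<forall>\<^sub>F n in sequentially. X n > y"
            using X True by (simp add: order_tendstoD(1))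
          then have ev: "\<forall>\<^sub>F n in sequentially. v y * g (X n - y) (X n) = F (X n) y"
            by eventually_elim (simp add: F_def)
          have "F x0 y = v y * g (x0 - y) x0" using True by (simp add: F_def)
          then have lim: "(\<lambda>n. v y * g (X n - y) (X n)) \<longlonglongrightarrow> F x0 y"
            using tendsto_mult[OF tendsto_const gc[OF X]] by simp
          show ?thesis by (rule Lim_transform_eventually[OF lim ev])
        next
          case False
          then have "y > x0" using elim by simp
          then have "\<forall>\<^sub>F n in sequentially. X n < y"
            using X by (simp add: order_tendstoD(2))
          then have ev: "\<forall>\<^sub>F n in sequentially. 0 = F (X n) y"
            by eventually_elim (simp add: F_def)
          have "F x0 y = 0" using \<open>y > x0\<close> by (simp add: F_def)
          then show ?thesis using Lim_transform_eventually[OF tendsto_const ev] by simp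
        qed
      qed
      show "AE y in lborel. norm (F (X n) y) \<le> w y" for n
      proof (rule AE_I2)
        fix y show "norm (F (X n) y) \<le> w y"
        proof (cases "y < X n")
          case True
          have "norm (F (X n) y) = \<bar>v y\<bar> * g (X n - y) (X n)"
            using True gnn by (simp add: F_def abs_mult)
          also have "\<dots> \<le> B * (Cg * inverse (1 + (X n - y)^2))"
            by (intro mult_mono vb gb) (auto simp: B0 gnn)
          also have "\<dots> \<le> B * (Cg * ((2 + 2*R^2) * inverse (1 + (y-x0)^2)))"
            using inv_bound[of "X n" x0 R y] R(2)[of n]
            by (intro mult_left_mono) (auto simp: B0 Cg0)
          finally show ?thesis by (simp add: w_def mult_ac)
        next
          case False
          then have "F (X n) y = 0" by (simp add: F_def)
          then show ?thesis using B0 Cg0 by (simp add: w_def)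
        qed
      qed
    qed
  qed
qed
lemma H_quad_bound:
  fixes H :: "real \<Rightarrow> real"
  assumes H_bdd: "bounded (range H)"
    and H_decay: "(\<exists>R. \<forall>s. \<bar>s\<bar> > R \<longrightarrow> H s = 0) \<or>
                  (\<forall>k n. bounded (range (\<lambda>s. \<bar>s\<bar> ^ n * (deriv ^^ k) H s)))"
  shows "\<exists>C. \<forall>s. (1 + s^2) * H s \<le> C"
proof -
  obtain M where M: "\<And>s. \<bar>H s\<bar> \<le> M" using H_bdd unfolding bounded_iff by auto
  from H_decay show ?thesis
  proof
    assume "\<exists>R. \<forall>s. \<bar>s\<bar> > R \<longrightarrow> H s = 0"
    then obtain R where R: "\<And>s. \<bar>s\<bar> > R \<Longrightarrow> H s = 0" by auto
    have "(1 + s^2) * H s \<le> (1 + R^2) * M" for s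
    proof (cases "\<bar>s\<bar> > R")
      case True then show ?thesis using R[OF True] M[of s] by (simp add: mult_nonneg_nonneg)
    next
      case False
      then have "s^2 \<le> R^2" by (metis abs_ge_zero not_less power2_abs power_mono)
      have M0: "M \<ge> 0" using M[of 0] by simp
      have "(1 + s^2) * H s \<le> (1 + s^2) * M"
        using M[of s] by (intro mult_left_mono) auto
      also have "\<dots> \<le> (1 + R^2) * M" using M0 \<open>s^2 \<le> R^2\<close> by (intro mult_right_mono) auto
      finally show ?thesis .
    qed
    then show ?thesis by blast
  next
    assume "\<forall>k n. bounded (range (\<lambda>s. \<bar>s\<bar> ^ n * (deriv ^^ k) H s))"
    then have "bounded (range (\<lambda>s. \<bar>s\<bar> ^ 2 * H s))"
      by (metis funpow_0)
    then obtain M2 where M2: "\<And>s. \<bar>\<bar>s\<bar> ^ 2 * H s\<bar> \<le> M2" unfolding bounded_iff by auto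
    have "(1 + s^2) * H s \<le> M + M2" for s
      using M[of s] M2[of s] by (simp add: algebra_simps)
    then show ?thesis by blast
  qed
qed

lemma gamma_bound:
  fixes H \<zeta> :: "real \<Rightarrow> real"
  assumes HC: "\<And>s. (1 + s^2) * H s \<le> C" and Hn: "\<And>s. H s \<ge> 0"
    and zm: "\<And>x. \<delta>m \<le> \<zeta> x" and dp: "\<delta>m > 0"
  shows "gamma_ker H \<zeta> s x \<le> (C * max 1 (1/\<delta>m^2)) * inverse (1 + s^2)"
proof -
  define z where "z = \<zeta> x"
  have z: "z \<ge> \<delta>m" "z > 0" using zm[of x] dp by (auto simp: z_def)
  have C0: "C \<ge> 0" using HC[of 0] Hn[of 0] by simp
  have h: "(1 + (s/z)^2) * H (s/z) \<le> C" by (rule HC)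
  have e1: "(1 + (s/z)^2) = (z^2 + s^2) / z^2" using z by (simp add: field_simps power2_eq_square)
  have g: "gamma_ker H \<zeta> s x = H (s/z) / z^2" by (simp add: gamma_ker_def z_def)
  have sz: "z^2 + s^2 > 0" using z by (simp add: add_pos_nonneg)
  have "H (s/z) * (z^2 + s^2) \<le> C * z^2"
    using h z unfolding e1 by (simp add: field_simps)
  then have "H (s/z) \<le> C * z^2 / (z^2 + s^2)" using sz by (subst pos_le_divide_eq) auto
  then have "H (s/z) / z^2 \<le> C / (z^2 + s^2)"
    using z sz by (simp add: field_simps)
  also have "\<dots> \<le> (C * max 1 (1/\<delta>m^2)) / (1 + s^2)"
  proof -
    have "1 \<le> z^2 / \<delta>m^2" using z dp by (simp add: field_simps power_mono)
    then have "1 \<le> max 1 (1/\<delta>m^2) * z^2" using dp by (simp add: field_simps max_def split: if_splits)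
    moreover have "s^2 \<le> max 1 (1/\<delta>m^2) * s^2" by (simp add: max_def mult_le_cancel_right1 split: if_splits)
    ultimately have "1 + s^2 \<le> max 1 (1/\<delta>m^2) * (z^2 + s^2)" by (simp add: algebra_simps)
    then have "C * (1 + s^2) \<le> (C * max 1 (1/\<delta>m^2)) * (z^2 + s^2)"
      using C0 by (metis mult.assoc mult_left_mono)
    then have "C * (1 + s^2) / (z^2 + s^2) \<le> C * max 1 (1/\<delta>m^2)"
      using sz by (subst pos_divide_le_eq) auto
    then have "C * (1 + s^2) / (z^2 + s^2) / (1 + s^2) \<le> C * max 1 (1/\<delta>m^2) / (1 + s^2)"
      by (rule divide_right_mono) simp
    moreover have "C * (1 + s^2) / (z^2 + s^2) / (1 + s^2) = C / (z^2 + s^2)"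
    proof -
      have p: "1 + s^2 > 0" by (simp add: add_pos_nonneg)
      have "C * (1 + s^2) / (z^2 + s^2) / (1 + s^2) = (C * (1 + s^2)) / ((z^2 + s^2) * (1 + s^2))"
        by (rule divide_divide_eq_left)
      also have "\<dots> = C / (z^2 + s^2)" using p by (intro mult_divide_mult_cancel_right) simp
      finally show ?thesis .
    qed
    ultimately show ?thesis by simp
  qed
  finally show ?thesis by (simp add: g divide_inverse)
qed
theorem corollary1:
  fixes H \<zeta> \<psi>0 :: "real \<Rightarrow> real" and u :: "real \<Rightarrow> real \<Rightarrow> real"
    and \<delta>m :: real and D :: "real set"
  assumes H_smooth: "smooth_fun H"
    and H_bdd: "bounded (range H)"
    and H_even: "\<And>s. H (- s) = H s"
    and H_nonneg: "\<And>s. H s \<ge> 0"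
    and H_moment: "((\<lambda>s. s * H s) has_integral 1) {0..}"
    and H_decay: "(\<exists>R. \<forall>s. \<bar>s\<bar> > R \<longrightarrow> H s = 0) \<or>
                  (\<forall>k n. bounded (range (\<lambda>s. \<bar>s\<bar> ^ n * (deriv ^^ k) H s)))"
    and zeta_cont: "continuous_on UNIV \<zeta>"
    and zeta_bdd: "bounded (range \<zeta>)"
    and zeta_min: "(\<exists>x0. \<zeta> x0 = \<delta>m) \<and> (\<forall>x. \<delta>m \<le> \<zeta> x)"
    and delta_pos: "\<delta>m > 0"
    and psi_pw: "pw_cont_off \<psi>0 D"
    and psi_bdd: "bounded (range \<psi>0)"
    and u_init: "\<And>x. u x 0 = \<psi>0 x"
    and u_cont0: "\<And>x. continuous_on {0..} (\<lambda>t. u x t)"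
    and u_bdd: "\<And>T. bounded ((\<lambda>(x, t). u x t) ` (UNIV \<times> {0..T}))"
    and u_int: "\<And>x t. t > 0 \<Longrightarrow>
        set_integrable lborel {0<..} (\<lambda>s. (u x t - u (x - s) t) * gamma_ker H \<zeta> s x)"
    and u_eq: "\<And>x t. t > 0 \<Longrightarrow>
        ((\<lambda>\<tau>. u x \<tau>) has_real_derivative
           - (LBINT s:{0<..}. (u x t - u (x - s) t) * gamma_ker H \<zeta> s x)) (at t)"
  shows "\<forall>t > 0. pw_cont_off (\<lambda>x. u x t) D"
proof -
  define g where "g = (\<lambda>s x. gamma_ker H \<zeta> s x)"
  have zm: "\<And>x. \<delta>m \<le> \<zeta> x" using zeta_min by blast
  have zpos: "\<And>x. \<zeta> x > 0" using zm delta_pos less_le_trans by blast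
  have Hc: "isCont H s" for s
    using H_smooth unfolding smooth_fun_def
    by (metis differentiable_imp_continuous_within funpow_0)
  have zc: "isCont \<zeta> x" for x
    using zeta_cont by (simp add: continuous_on_eq_continuous_at)
  obtain C where HC: "\<And>s. (1 + s^2) * H s \<le> C"
    using H_quad_bound[OF H_bdd H_decay] by blast
  define Cg where "Cg = C * max 1 (1/\<delta>m^2)"
  have gb: "g s x \<le> Cg * inverse (1 + s^2)" for s x
    unfolding g_def Cg_def by (rule gamma_bound[OF HC H_nonneg zm delta_pos])
  have gnn: "0 \<le> g s x" for s x
    unfolding g_def gamma_ker_def using H_nonneg by simp
  have gc: "(\<lambda>n. g (X n - y) (X n)) \<longlonglongrightarrow> g (x0 - y) x0" if X: "X \<longlonglongrightarrow> x0" for X y x0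
  proof -
    have z: "(\<lambda>n. \<zeta> (X n)) \<longlonglongrightarrow> \<zeta> x0" by (rule isCont_tendsto_compose[OF zc X])
    have "(\<lambda>n. (X n - y) / \<zeta> (X n)) \<longlonglongrightarrow> (x0 - y) / \<zeta> x0"
      using zpos[of x0] by (intro tendsto_intros X z) auto
    then have "(\<lambda>n. H ((X n - y) / \<zeta> (X n))) \<longlonglongrightarrow> H ((x0 - y) / \<zeta> x0)"
      by (rule isCont_tendsto_compose[OF Hc])
    then show ?thesis unfolding g_def gamma_ker_def
      using zpos[of x0] by (intro tendsto_intros z) auto
  qed
  have ib: "integrable lborel (\<lambda>y::real. inverse (1 + y^2))"
    using integrable_inverse_1_plus_square by (simp add: set_integrable_def einterval_eq_UNIV)
  have ibs: "set_integrable lborel {0<..} (\<lambda>s::real. Cg * inverse (1 + s^2))"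
    unfolding set_integrable_def
    by (rule integrable_mult_indicator) (auto intro: ib)
  have gmeas: "(\<lambda>s. g s x) \<in> borel_measurable lborel" for x
  proof -
    have "continuous_on UNIV (\<lambda>s. g s x)"
      unfolding g_def gamma_ker_def
      by (intro continuous_at_imp_continuous_on ballI continuous_intros isCont_o2[OF _ Hc])
         (use zpos[of x] in auto)
    then show ?thesis by (simp add: borel_measurable_continuous_onI)
  qed
  have gint: "set_integrable lborel {0<..} (\<lambda>s. g s x)" for x
    unfolding set_integrable_def
  proof (rule Bochner_Integration.integrable_bound[OF ibs[unfolded set_integrable_def]])
    show "(\<lambda>s. indicator {0<..} s *\<^sub>R g s x) \<in> borel_measurable lborel"
      using gmeas by measurable
    show "AE s in lborel. norm (indicator {0<..} s *\<^sub>R g s x) \<le> norm (indicator {0<..} s *\<^sub>R (Cg * inverse (1 + s^2)))"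
      using gb gnn by (auto simp: indicator_def intro!: AE_I2 order_trans[OF gb abs_ge_self])
  qed
  define A where "A x = (LBINT s:{0<..}. g s x)" for x
  define Am where "Am = (LBINT s:{0<..}. Cg * inverse (1 + s^2))"
  have A0: "0 \<le> A x" for x
    unfolding A_def set_lebesgue_integral_def
    by (rule Bochner_Integration.integral_nonneg) (simp add: gnn)
  have Ab: "A x \<le> Am" for x
    unfolding A_def Am_def by (rule set_integral_mono[OF gint ibs gb])
  have Acont: "isCont A x0" for x0
    using cont_lemma[of "\<lambda>_. 1" 1 g Cg x0, OF _ gnn gb gc] gint unfolding A_def by simp
  show ?thesis
  proof (intro allI impI)
    fix t :: real assume t: "t > 0"
    have ubd: "\<exists>B. \<forall>y. \<bar>u y \<tau>\<bar> \<le> B" if "\<tau> \<ge> 0" for \<tau>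
    proof -
      obtain B where B: "\<And>z. z \<in> (\<lambda>(x, t). u x t) ` (UNIV \<times> {0..\<tau>}) \<Longrightarrow> norm z \<le> B"
        using u_bdd[of \<tau>] unfolding bounded_iff by blast
      show ?thesis using B that by (intro exI[of _ B]) force
    qed
    obtain Bt where Bt: "\<And>y \<tau>. 0 \<le> \<tau> \<Longrightarrow> \<tau> \<le> t \<Longrightarrow> \<bar>u y \<tau>\<bar> \<le> Bt"
    proof -
      obtain B where B: "\<And>z. z \<in> (\<lambda>(x, t). u x t) ` (UNIV \<times> {0..t}) \<Longrightarrow> norm z \<le> B"
        using u_bdd[of t] unfolding bounded_iff by blast
      show ?thesis using B by (intro that[of B]) force
    qed
    have Bt0: "0 \<le> Bt" using Bt[of 0 0] t by force
    define K where "K x \<tau> = (LBINT s:{0<..}. u (x - s) \<tau> * g s x)" for x \<tau>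
    have uint: "set_integrable lborel {0<..} (\<lambda>s. u (x - s) \<tau> * g s x)" if "\<tau> > 0" for x \<tau>
    proof -
      have "set_integrable lborel {0<..} (\<lambda>s. u x \<tau> * g s x - (u x \<tau> - u (x - s) \<tau>) * g s x)"
        using u_int[OF that, of x] gint[of x] unfolding g_def by (intro set_integral_diff(1)) auto
      then show ?thesis by (simp add: algebra_simps)
    qed
    have Kcont: "isCont (\<lambda>x. K x \<tau>) x0" if tp0: "\<tau> > 0" for \<tau> x0
    proof -
      obtain B where B: "\<And>y. \<bar>u y \<tau>\<bar> \<le> B" using ubd[of \<tau>] tp0 by force
      show ?thesis unfolding K_def
        by (rule cont_lemma[of "\<lambda>y. u y \<tau>" B g Cg x0, OF B gnn gb gc uint[OF tp0]])
    qed
    have Kb: "\<bar>K x \<tau>\<bar> \<le> Bt * Am" if "0 < \<tau>" "\<tau> \<le> t" for x \<tau>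
    proof -
      have "\<bar>K x \<tau>\<bar> \<le> (LBINT s:{0<..}. \<bar>u (x - s) \<tau> * g s x\<bar>)"
        unfolding K_def using set_integral_norm_bound[OF uint[OF that(1)]] by simp
      also have "\<dots> \<le> (LBINT s:{0<..}. Bt * g s x)"
        using that gnn
        by (intro set_integral_mono set_integrable_abs uint set_integrable_mult_right gint)
           (auto simp: abs_mult intro!: mult_right_mono Bt)
      also have "\<dots> = Bt * A x" by (simp add: A_def)
      also have "\<dots> \<le> Bt * Am" using Ab Bt0 by (intro mult_left_mono) auto
      finally show ?thesis .
    qed
    have uder: "((\<lambda>\<tau>. u x \<tau>) has_real_derivative - (u x \<tau> * A x - K x \<tau>)) (at \<tau>)" if "\<tau> > 0" for x \<tau>
    proof -
      have "(LBINT s:{0<..}. (u x \<tau> - u (x - s) \<tau>) * gamma_ker H \<zeta> s x)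
          = (LBINT s:{0<..}. u x \<tau> * g s x - u (x - s) \<tau> * g s x)"
        by (simp add: g_def algebra_simps)
      also have "\<dots> = u x \<tau> * A x - K x \<tau>"
        using gint[of x] uint[OF that, of x] unfolding A_def K_def
        by (subst set_integral_diff(2)) auto
      finally show ?thesis using u_eq[OF that, of x] by simp
    qed
    define J where "J x = integral {0..t} (\<lambda>\<tau>. exp (A x * \<tau>) * K x \<tau>)" for x
    have Jhas: "((\<lambda>\<tau>. exp (A x * \<tau>) * K x \<tau>) has_integral (exp (A x * t) * u x t - \<psi>0 x)) {0..t}" for x
    proof -
      have "((\<lambda>\<tau>. exp (A x * \<tau>) * K x \<tau>) has_integral
              (exp (A x * t) * u x t - exp (A x * 0) * u x 0)) {0..t}"
      proof (rule fundamental_theorem_of_calculus_interior)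
        show "0 \<le> t" using t by simp
        show "continuous_on {0..t} (\<lambda>\<tau>. exp (A x * \<tau>) * u x \<tau>)"
          by (intro continuous_intros continuous_on_subset[OF u_cont0]) auto
        fix \<tau> assume "\<tau> \<in> {0<..<t}"
        then have tp: "\<tau> > 0" by simp
        have e: "((\<lambda>\<tau>. exp (A x * \<tau>)) has_real_derivative exp (A x * \<tau>) * A x) (at \<tau>)"
          by (auto intro!: derivative_eq_intros)
        have "((\<lambda>\<tau>. exp (A x * \<tau>) * u x \<tau>) has_real_derivative exp (A x * \<tau>) * K x \<tau>) (at \<tau>)"
          by (rule DERIV_cong[OF DERIV_mult[OF e uder[OF tp]]]) (simp add: algebra_simps)
        then show "((\<lambda>\<tau>. exp (A x * \<tau>) * u x \<tau>) has_vector_derivative exp (A x * \<tau>) * K x \<tau>) (at \<tau>)"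
          by (simp add: has_real_derivative_iff_has_vector_derivative)
      qed
      then show ?thesis by (simp add: u_init)
    qed
    have urep: "u x t = exp (- (A x * t)) * (\<psi>0 x + J x)" for x
      using integral_unique[OF Jhas[of x]] unfolding J_def by (simp add: exp_minus field_simps)
    have Jcont: "isCont J x0" for x0
      unfolding continuous_at_sequentially comp_def
    proof (intro allI impI)
      fix X assume X: "X \<longlonglongrightarrow> x0"
      define f where "f n \<tau> = (if \<tau> = 0 then 0 else exp (A (X n) * \<tau>) * K (X n) \<tau>)" for n \<tau>
      define f0 where "f0 \<tau> = (if \<tau> = 0 then 0 else exp (A x0 * \<tau>) * K x0 \<tau>)" for \<tau>
      have fh: "(f n has_integral (exp (A (X n) * t) * u (X n) t - \<psi>0 (X n))) {0..t}" for n
        by (rule has_integral_spike[OF negligible_sing[of 0] _ Jhas[of "X n"]]) (auto simp: f_def)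
      have Jn: "integral {0..t} (f n) = J (X n)" for n
        unfolding J_def by (rule integral_spike[OF negligible_sing[of 0]]) (auto simp: f_def)
      have J0: "integral {0..t} f0 = J x0"
        unfolding J_def by (rule integral_spike[OF negligible_sing[of 0]]) (auto simp: f0_def)
      have "(\<lambda>n. integral {0..t} (f n)) \<longlonglongrightarrow> integral {0..t} f0"
      proof (rule dominated_convergence(2))
        show "f n integrable_on {0..t}" for n using fh by blast
        show "(\<lambda>_. exp (Am * t) * (Bt * Am)) integrable_on {0..t}" by (rule integrable_const_ivl)
        show "norm (f n \<tau>) \<le> exp (Am * t) * (Bt * Am)" if "\<tau> \<in> {0..t}" for n \<tau>
        proof (cases "\<tau> = 0")
          case True then show ?thesis using Bt0 Ab[of 0] A0[of 0] by (simp add: f_def)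
        next
          case False
          then have tp: "0 < \<tau>" "\<tau> \<le> t" using that by auto
          have "A (X n) * \<tau> \<le> Am * t"
            using Ab A0 tp order_trans[OF A0 Ab] by (intro mult_mono) auto
          then have "exp (A (X n) * \<tau>) \<le> exp (Am * t)" by simp
          then show ?thesis using False Kb[OF tp, of "X n"]
            by (simp add: f_def abs_mult) (intro mult_mono, auto)
        qed
        show "(\<lambda>n. f n \<tau>) \<longlonglongrightarrow> f0 \<tau>" if "\<tau> \<in> {0..t}" for \<tau>
        proof (cases "\<tau> = 0")
          case True then show ?thesis by (simp add: f_def f0_def)
        next
          case False
          then have tp: "\<tau> > 0" using that by auto
          show ?thesis unfolding f_def f0_def using False
            by (simp, intro tendsto_intros isCont_tendsto_compose[OF Acont X]
                 isCont_tendsto_compose[OF Kcont[OF tp] X])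
        qed
      qed
      then show "(\<lambda>n. J (X n)) \<longlonglongrightarrow> J x0" unfolding Jn J0 .
    qed
    have ueq: "(\<lambda>x. u x t) = (\<lambda>x. exp (- (A x * t)) * (\<psi>0 x + J x))"
      using urep by auto
    have ctn: "((\<lambda>x. exp (- (A x * t)) * (\<psi>0 x + J x)) \<longlongrightarrow> exp (- (A d * t)) * (l + J d)) F"
      if "(\<psi>0 \<longlongrightarrow> l) F" "F \<le> at d" for F d l
    proof -
      have a: "(A \<longlongrightarrow> A d) F" using Acont[of d] that(2) unfolding isCont_def by (rule tendsto_mono[rotated])
      have j: "(J \<longlongrightarrow> J d) F" using Jcont[of d] that(2) unfolding isCont_def by (rule tendsto_mono[rotated])
      show ?thesis by (intro tendsto_intros a j that(1))
    qed
    show "pw_cont_off (\<lambda>x. u x t) D"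
      unfolding ueq pw_cont_off_def
    proof (intro conjI allI impI ballI)
      show "finite D" using psi_pw by (simp add: pw_cont_off_def)
      fix x assume "x \<notin> D"
      then have "isCont \<psi>0 x" using psi_pw by (simp add: pw_cont_off_def)
      then show "isCont (\<lambda>x. exp (- (A x * t)) * (\<psi>0 x + J x)) x"
        unfolding isCont_def using ctn[where F="at x" and d=x and l="\<psi>0 x"] by simp
    next
      fix d assume "d \<in> D"
      then obtain l r where "(\<psi>0 \<longlongrightarrow> l) (at_left d)" "(\<psi>0 \<longlongrightarrow> r) (at_right d)"
        using psi_pw by (auto simp: pw_cont_off_def)
      then show "\<exists>l. ((\<lambda>x. exp (- (A x * t)) * (\<psi>0 x + J x)) \<longlongrightarrow> l) (at_left d)"
        "\<exists>r. ((\<lambda>x. exp (- (A x * t)) * (\<psi>0 x + J x)) \<longlongrightarrow> r) (at_right d)"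
        using ctn[where F="at_left d" and d=d] ctn[where F="at_right d" and d=d] by (auto simp: at_le)
    qed
  qed
qed

end
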